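(* Let $0<r_i<r_o$, $0<h<H$, $n>0$, $p>0$, and set $\Omega^-=[r_i,r_o]\times[0,h]$ in the $(r,z)$-plane. Let $\boldsymbol\sigma^0$ be the axisymmetric stress field $$\sigma^0_r=a+a_r r^{-2/n},\quad \sigma^0_\theta=a+a_\theta r^{-2/n},\quad \sigma^0_z=a+a_z r^{-2/n},\quad \sigma^0_{rz}=0,$$ with $$a=p\,\frac{r_i^{2/n}}{r_o^{2/n}-r_i^{2/n}},\quad a_r=-p\,\frac{r_i^{2/n}r_o^{2/n}}{r_o^{2/n}-r_i^{2/n}},\quad a_\theta=\frac{n-2}{n}a_r,\quad a_z=\frac{n-1}{n}a_r,$$ and put $c=3^{\frac{n-1}{2}}\,a_r|a_r|^{n-1}\,n^{-n}$. Then for every admissible virtual stress field $\delta\boldsymbol\sigma$ (defined in the context) $$\int_{\Omega^-}\dot{\boldsymbol\varepsilon}(\boldsymbol\sigma^0):\delta\boldsymbol\sigma\;r\,dr\,dz=-\int_{r_i}^{r_o}\frac{c}{r}\,\delta\sigma_{rz}(r,h)\,r\,dr .$$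
   Context: Axisymmetric stress fields in a pipe are described in cylindrical coordinates by components $\sigma_r,\sigma_\theta,\sigma_z,\sigma_{rz}$ depending on $(r,z)\in[r_i,r_o]\times[0,H]$ (all other shear components vanish). An admissible virtual stress field $\delta\boldsymbol\sigma$ is a continuously differentiable such field on $[r_i,r_o]\times[0,H]$ satisfying the axisymmetric equilibrium equations $$\frac{\partial \sigma_r}{\partial r}+\frac{1}{r}(\sigma_r-\sigma_\theta)+\frac{\partial\sigma_{rz}}{\partial z}=0,\qquad \frac{\partial\sigma_{rz}}{\partial r}+\frac{1}{r}\sigma_{rz}+\frac{\partial\sigma_z}{\partial z}=0,$$ and the homogeneous boundary conditions $\sigma_r=\sigma_{rz}=0$ at $r=r_i$ and $r=r_o$, and $\sigma_{rz}=0$ at $z=0$ and $z=H$. Norton's creep law (with unit coefficient): $\dot{\boldsymbol\varepsilon}(\boldsymbol\sigma)=\boldsymbol s\,(\sigma_{vM})^{n-1}$, where $\boldsymbol s=\boldsymbol\sigma-\frac13\mathrm{tr}(\boldsymbol\sigma)\boldsymbol I$ is the stress deviator and $\sigma_{vM}=\sqrt{\tfrac32\boldsymbol s:\boldsymbol s}$. For axisymmetric tensors, $\boldsymbol\varepsilon:\boldsymbol\sigma=\varepsilon_r\sigma_r+\varepsilon_\theta\sigma_\theta+\varepsilon_z\sigma_z+2\varepsilon_{rz}\sigma_{rz}$. *)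

theory Defs
  imports "HOL-Analysis.Analysis"
begin

definition C1_on :: "(real \<times> real) set \<Rightarrow> (real \<times> real \<Rightarrow> real)
    \<Rightarrow> (real \<times> real \<Rightarrow> real) \<Rightarrow> (real \<times> real \<Rightarrow> real) \<Rightarrow> bool" where
  "C1_on S f fr fz \<longleftrightarrow>
     (\<forall>x\<in>S. (f has_derivative (\<lambda>(u,v). fr x * u + fz x * v)) (at x within S))
     \<and> continuous_on S fr \<and> continuous_on S fz"

definition admissible ::
  "real \<Rightarrow> real \<Rightarrow> real \<Rightarrow> (real \<times> real \<Rightarrow> real) \<Rightarrow> (real \<times> real \<Rightarrow> real)
     \<Rightarrow> (real \<times> real \<Rightarrow> real) \<Rightarrow> (real \<times> real \<Rightarrow> real) \<Rightarrow> bool" where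
  "admissible ri ro H sr st sz srz \<longleftrightarrow>
     (let S = cbox (ri, 0) (ro, H) in
      (\<exists>sr_r sr_z st_r st_z sz_r sz_z srz_r srz_z.
         C1_on S sr sr_r sr_z \<and> C1_on S st st_r st_z \<and>
         C1_on S sz sz_r sz_z \<and> C1_on S srz srz_r srz_z \<and>
         (\<forall>r z. (r, z) \<in> S \<longrightarrow>
             sr_r (r, z) + (sr (r, z) - st (r, z)) / r + srz_z (r, z) = 0 \<and>
             srz_r (r, z) + srz (r, z) / r + sz_z (r, z) = 0)) \<and>
      (\<forall>z\<in>{0..H}. sr (ri, z) = 0 \<and> srz (ri, z) = 0 \<and> sr (ro, z) = 0 \<and> srz (ro, z) = 0) \<and>
      (\<forall>r\<in>{ri..ro}. srz (r, 0) = 0 \<and> srz (r, H) = 0))"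

text \<open>Von Mises stress of an axisymmetric stress (sigma_r, sigma_theta, sigma_z, sigma_rz);
  s:s = s_r^2 + s_theta^2 + s_z^2 + 2 s_rz^2.\<close>
definition von_mises :: "real \<times> real \<times> real \<times> real \<Rightarrow> real" where
  "von_mises \<sigma> = (case \<sigma> of (sr, st, sz, srz) \<Rightarrow>
     (let m = (sr + st + sz) / 3 in
      sqrt (3/2 * ((sr - m)^2 + (st - m)^2 + (sz - m)^2 + 2 * srz^2))))"

text \<open>Norton creep law with unit coefficient: strain rate = s * (sigma_vM)^(n-1),
  returned as (eps_r, eps_theta, eps_z, eps_rz).\<close>
definition norton :: "real \<Rightarrow> real \<times> real \<times> real \<times> real \<Rightarrow> real \<times> real \<times> real \<times> real" where
  "norton n \<sigma> = (case \<sigma> of (sr, st, sz, srz) \<Rightarrow>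
     (let m = (sr + st + sz) / 3; k = von_mises \<sigma> powr (n - 1) in
      ((sr - m) * k, (st - m) * k, (sz - m) * k, srz * k)))"

definition contr :: "real \<times> real \<times> real \<times> real \<Rightarrow> real \<times> real \<times> real \<times> real \<Rightarrow> real" where
  "contr e \<sigma> = (case e of (er, et, ez, erz) \<Rightarrow> case \<sigma> of (sr, st, sz, srz) \<Rightarrow>
     er * sr + et * st + ez * sz + 2 * erz * srz)"

end

theory Submission
  imports Defs
begin

lemma pointwise:
  fixes a arr n r x y z w :: real
  assumes n: "n>0" and r: "r>0" and arr: "arr \<noteq> 0"
  shows "contr (norton n (a + arr * r powr (-2/n), a + (n-2)/n*arr * r powr (-2/n),
            a + (n-1)/n*arr*r powr(-2/n), 0)) (x,y,z,w) * r
       = 3 powr ((n-1)/2) * arr * \<bar>arr\<bar> powr (n-1) * n powr (-n) * (x - y) / r"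
proof -
  define t where "t = r powr (-2/n)"
  have t: "t > 0" using r by (simp add: t_def)
  define m where "m = ((a + arr * t) + (a + (n-2)/n*arr * t) + (a + (n-1)/n*arr*t)) / 3"
  have m: "m = a + (n-1)/n*arr*t" unfolding m_def using n by (simp add: field_simps)
  have d1: "a + arr * t - m = arr/n*t" using n by (simp add: m field_simps)
  have d2: "a + (n-2)/n*arr * t - m = -(arr/n*t)" using n by (simp add: m field_simps)
  have d3: "a + (n-1)/n*arr * t - m = 0" using n by (simp add: m field_simps)
  have vm: "von_mises (a + arr * t, a + (n-2)/n*arr * t, a + (n-1)/n*arr*t, 0) = sqrt 3 * (\<bar>arr\<bar> * t / n)"
  proof -
    have "von_mises (a + arr * t, a + (n-2)/n*arr * t, a + (n-1)/n*arr*t, 0)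
       = sqrt (3/2 * ((arr/n*t)^2 + (-(arr/n*t))^2 + 0^2 + 2 * 0^2))"
      unfolding von_mises_def Let_def prod.case m_def[symmetric] d1 d2 d3 by simp
    also have "\<dots> = sqrt (3 * (arr/n*t)^2)" by simp
    also have "\<dots> = sqrt 3 * \<bar>arr/n*t\<bar>" by (simp add: real_sqrt_mult)
    also have "\<dots> = sqrt 3 * (\<bar>arr\<bar> * t / n)" using t n by (simp add: abs_mult)
    finally show ?thesis .
  qed
  define K where "K = (sqrt 3 * (\<bar>arr\<bar> * t / n)) powr (n - 1)"
  have K: "K = 3 powr ((n-1)/2) * \<bar>arr\<bar> powr (n-1) * t powr (n-1) / n powr (n-1)"
    unfolding K_def using t n
    by (simp add: powr_mult powr_divide sqrt_def root_powr_inverse powr_powr)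
  have tt: "t * t powr (n-1) = 1 / r^2"
  proof -
    have "t * t powr (n-1) = t powr n" using t by (simp add: powr_mult_base)
    also have "\<dots> = r powr (-2)" unfolding t_def using n r by (simp add: powr_powr)
    also have "\<dots> = 1 / r^2" using r by (simp add: powr_minus powr_realpow inverse_eq_divide)
    finally show ?thesis .
  qed
  have nn: "1 / n / n powr (n-1) = n powr (-n)"
    using n by (simp add: powr_diff powr_minus divide_simps)
  have "contr (norton n (a + arr * t, a + (n-2)/n*arr * t, a + (n-1)/n*arr*t, 0)) (x,y,z,w) * r
      = arr/n*t*K*(x-y)*r"
    unfolding norton_def contr_def Let_def prod.case m_def[symmetric] d1 d2 d3 vm K_def[symmetric]
    by (simp add: algebra_simps diff_divide_distrib)
  also have "\<dots> = 3 powr ((n-1)/2) * arr * \<bar>arr\<bar> powr (n-1) * (1 / n / n powr (n-1)) * (t * t powr (n-1)) * (x - y) * r"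
    unfolding K by (simp add: field_simps)
  also have "\<dots> = 3 powr ((n-1)/2) * arr * \<bar>arr\<bar> powr (n-1) * n powr (-n) * (x - y) / r"
    unfolding nn tt using r by (simp add: field_simps power2_eq_square)
  finally show ?thesis unfolding t_def .
qed

lemma partial_r:
  fixes f fr fz :: "real \<times> real \<Rightarrow> real"
  assumes C: "C1_on (cbox (ri,0) (ro,H)) f fr fz" and z: "z \<in> {0..H}" and r: "r \<in> {ri..ro}"
  shows "((\<lambda>r. f (r,z)) has_vector_derivative fr (r,z)) (at r within {ri..ro})"
proof -
  have D: "\<And>x. x \<in> cbox (ri,0) (ro,H) \<Longrightarrow> (f has_derivative (\<lambda>(u,v). fr x * u + fz x * v)) (at x within cbox (ri,0) (ro,H))"
    using C by (simp add: C1_on_def)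
  have l: "((\<lambda>r. (r,z)) has_derivative (\<lambda>u. (u,0))) (at r within {ri..ro})"
    by (auto intro!: derivative_eq_intros)
  have im: "(\<lambda>r. (r,z)) ` {ri..ro} \<subseteq> cbox (ri,0) (ro,H)" using z by auto
  show ?thesis
    using has_derivative_in_compose2[OF D im r l] by (simp add: has_vector_derivative_def mult.commute)
qed

lemma partial_z:
  fixes f fr fz :: "real \<times> real \<Rightarrow> real"
  assumes C: "C1_on (cbox (ri,0) (ro,H)) f fr fz" and r: "r \<in> {ri..ro}" and z: "z \<in> {0..h}" and hH: "h \<le> H"
  shows "((\<lambda>z. f (r,z)) has_vector_derivative fz (r,z)) (at z within {0..h})"
proof -
  have D: "\<And>x. x \<in> cbox (ri,0) (ro,H) \<Longrightarrow> (f has_derivative (\<lambda>(u,v). fr x * u + fz x * v)) (at x within cbox (ri,0) (ro,H))"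
    using C by (simp add: C1_on_def)
  have l: "((\<lambda>z. (r,z)) has_derivative (\<lambda>u. (0,u))) (at z within {0..h})"
    by (auto intro!: derivative_eq_intros)
  have im: "(\<lambda>z. (r,z)) ` {0..h} \<subseteq> cbox (ri,0) (ro,H)" using r hH by auto
  show ?thesis
    using has_derivative_in_compose2[OF D im z l] by (simp add: has_vector_derivative_def mult.commute)
qed

theorem mainTheorem1:
  fixes ri ro h H n p :: real
    and dsr dst dsz dsrz :: "real \<times> real \<Rightarrow> real"
  assumes "0 < ri" "ri < ro" "0 < h" "h < H" "0 < n" "0 < p"
    and "admissible ri ro H dsr dst dsz dsrz"
  shows
    "(let a = p * ri powr (2/n) / (ro powr (2/n) - ri powr (2/n));
          arr = - p * ri powr (2/n) * ro powr (2/n) / (ro powr (2/n) - ri powr (2/n));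
          ath = (n - 2) / n * arr;
          azz = (n - 1) / n * arr;
          c = 3 powr ((n - 1) / 2) * arr * \<bar>arr\<bar> powr (n - 1) * n powr (- n);
          \<sigma>0 = (\<lambda>r::real. (a + arr * r powr (-2/n), a + ath * r powr (-2/n),
                             a + azz * r powr (-2/n), 0::real))
      in integral (cbox (ri, 0) (ro, h))
           (\<lambda>(r, z). contr (norton n (\<sigma>0 r)) (dsr (r, z), dst (r, z), dsz (r, z), dsrz (r, z)) * r)
         = - integral {ri..ro} (\<lambda>r. c / r * dsrz (r, h) * r))"
proof -
  define a where "a = p * ri powr (2/n) / (ro powr (2/n) - ri powr (2/n))"
  define arr where "arr = - p * ri powr (2/n) * ro powr (2/n) / (ro powr (2/n) - ri powr (2/n))"
  define c where "c = 3 powr ((n - 1) / 2) * arr * \<bar>arr\<bar> powr (n - 1) * n powr (- n)"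
  have ri0: "0 < ri" and hH: "h < H" and n0: "0 < n" using assms by auto
  have lt: "ri powr (2/n) < ro powr (2/n)" using assms by (simp add: powr_less_mono2)
  have arr0: "arr \<noteq> 0" unfolding arr_def using lt assms by simp
  obtain sr_r sr_z st_r st_z sz_r sz_z srz_r srz_z where
    C1: "C1_on (cbox (ri,0) (ro,H)) dsr sr_r sr_z" and
    C2: "C1_on (cbox (ri,0) (ro,H)) dst st_r st_z" and
    C3: "C1_on (cbox (ri,0) (ro,H)) dsz sz_r sz_z" and
    C4: "C1_on (cbox (ri,0) (ro,H)) dsrz srz_r srz_z" and
    eq: "\<And>r z. (r, z) \<in> cbox (ri,0) (ro,H) \<Longrightarrow>
             sr_r (r, z) + (dsr (r, z) - dst (r, z)) / r + srz_z (r, z) = 0"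
    using assms(7) unfolding admissible_def Let_def by blast
  have bc: "\<And>z. z \<in> {0..H} \<Longrightarrow> dsr (ri, z) = 0 \<and> dsr (ro, z) = 0"
    and bc2: "\<And>r. r \<in> {ri..ro} \<Longrightarrow> dsrz (r, 0) = 0"
    using assms(7) unfolding admissible_def Let_def by auto
  define S' where "S' = cbox (ri,(0::real)) (ro,h)"
  have sub: "S' \<subseteq> cbox (ri,0) (ro,H)" unfolding S'_def using hH by (auto simp: cbox_interval)
  have cs1: "continuous_on S' sr_r" using C1 sub by (auto simp: C1_on_def intro: continuous_on_subset)
  have cs4: "continuous_on S' srz_z" using C4 sub by (auto simp: C1_on_def intro: continuous_on_subset)
  have e1: "integral S' (\<lambda>(r, z). contr (norton n (a + arr * r powr (-2/n), a + (n - 2) / n * arr * r powr (-2/n),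
                             a + (n - 1) / n * arr * r powr (-2/n), 0)) (dsr (r, z), dst (r, z), dsz (r, z), dsrz (r, z)) * r)
     = integral S' (\<lambda>x. (-c) * sr_r x + (-c) * srz_z x)"
  proof (rule integral_cong)
    fix x assume x: "x \<in> S'"
    obtain r z where xrz: "x = (r,z)" by fastforce
    have r0: "r > 0" using x ri0 unfolding xrz S'_def by (auto simp: cbox_interval)
    have "(r,z) \<in> cbox (ri,0) (ro,H)" using x sub xrz by auto
    from eq[OF this] have ED: "(dsr (r, z) - dst (r, z)) / r = - sr_r (r,z) - srz_z (r,z)" by linarith
    moreover have EP: "contr (norton n (a + arr * r powr (-2/n), a + (n - 2) / n * arr * r powr (-2/n),
                             a + (n - 1) / n * arr * r powr (-2/n), 0)) (dsr (r, z), dst (r, z), dsz (r, z), dsrz (r, z)) * r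
        = c * (dsr (r,z) - dst (r,z)) / r"
      unfolding c_def by (rule pointwise[OF n0 r0 arr0])
    ultimately show "(\<lambda>(r, z). contr (norton n (a + arr * r powr (-2/n), a + (n - 2) / n * arr * r powr (-2/n),
                             a + (n - 1) / n * arr * r powr (-2/n), 0)) (dsr (r, z), dst (r, z), dsz (r, z), dsrz (r, z)) * r) x
       = (-c) * sr_r x + (-c) * srz_z x"
      unfolding xrz prod.case EP times_divide_eq_right[symmetric] ED by (simp add: algebra_simps)
  qed
  have e2: "integral S' (\<lambda>x. (-c) * sr_r x + (-c) * srz_z x) = (-c) * integral S' sr_r + (-c) * integral S' srz_z"
  proof -
    have i1: "sr_r integrable_on S'" using cs1 unfolding S'_def by (rule integrable_continuous)
    have i4: "srz_z integrable_on S'" using cs4 unfolding S'_def by (rule integrable_continuous)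
    show ?thesis
    proof -
      have j1: "(\<lambda>x. (-c) * sr_r x) integrable_on S'" using integrable_cmul[OF i1, of "-c"] by simp
      have j4: "(\<lambda>x. (-c) * srz_z x) integrable_on S'" using integrable_cmul[OF i4, of "-c"] by simp
      have "integral S' (\<lambda>x. (-c) * sr_r x + (-c) * srz_z x) = integral S' (\<lambda>x. (-c) * sr_r x) + integral S' (\<lambda>x. (-c) * srz_z x)"
        by (rule integral_add[OF j1 j4])
      also have "\<dots> = (-c) * integral S' sr_r + (-c) * integral S' srz_z"
        by (simp only: integral_mult_right)
      finally show ?thesis .
    qed
  qed
  have I1: "integral S' sr_r = 0"
  proof -
    have "integral S' sr_r = integral (cbox ri ro) (\<lambda>r. integral (cbox 0 h) (\<lambda>z. sr_r (r, z)))"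
      using cs1 unfolding S'_def by (rule integral_prod_continuous)
    also have "\<dots> = integral (cbox 0 h) (\<lambda>z. integral (cbox ri ro) (\<lambda>r. sr_r (r, z)))"
      by (rule integral_swap_continuous[where f="\<lambda>r z. sr_r (r,z)"]) (use cs1 in \<open>simp add: S'_def\<close>)
    also have "\<dots> = integral (cbox 0 h) (\<lambda>z. 0)"
    proof (rule integral_cong)
      fix z assume z: "z \<in> cbox 0 (h::real)"
      then have zH: "z \<in> {0..H}" using hH by (auto simp: cbox_interval)
      have "((\<lambda>r. sr_r (r,z)) has_integral (dsr (ro,z) - dsr (ri,z))) {ri..ro}"
        by (rule fundamental_theorem_of_calculus) (use assms partial_r[OF C1 zH] in auto)
      then show "integral (cbox ri ro) (\<lambda>r. sr_r (r, z)) = 0"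
        using bc[OF zH] by (simp add: cbox_interval integral_unique)
    qed
    also have "\<dots> = 0" by simp
    finally show ?thesis .
  qed
  have I2: "integral S' srz_z = integral {ri..ro} (\<lambda>r. dsrz (r, h))"
  proof -
    have "integral S' srz_z = integral (cbox ri ro) (\<lambda>r. integral (cbox 0 h) (\<lambda>z. srz_z (r, z)))"
      using cs4 unfolding S'_def by (rule integral_prod_continuous)
    also have "\<dots> = integral (cbox ri ro) (\<lambda>r. dsrz (r, h))"
    proof (rule integral_cong)
      fix r assume r: "r \<in> cbox ri (ro::real)"
      then have r': "r \<in> {ri..ro}" by (auto simp: cbox_interval)
      have "((\<lambda>z. srz_z (r,z)) has_integral (dsrz (r,h) - dsrz (r,0))) {0..h}"
        by (rule fundamental_theorem_of_calculus) (use assms partial_z[OF C4 r' _ less_imp_le[OF hH]] in auto)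
      then show "integral (cbox 0 h) (\<lambda>z. srz_z (r, z)) = dsrz (r, h)"
        using bc2[OF r'] by (simp add: cbox_interval integral_unique)
    qed
    finally show ?thesis by (simp add: cbox_interval)
  qed
  have R: "integral {ri..ro} (\<lambda>r. c / r * dsrz (r, h) * r) = c * integral {ri..ro} (\<lambda>r. dsrz (r, h))"
  proof -
    have "integral {ri..ro} (\<lambda>r. c / r * dsrz (r, h) * r) = integral {ri..ro} (\<lambda>r. c * dsrz (r, h))"
      by (rule integral_cong) (use ri0 in auto)
    then show ?thesis by (simp add: integral_mult_right)
  qed
  show ?thesis
    unfolding Let_def a_def[symmetric] arr_def[symmetric] c_def[symmetric] S'_def[symmetric]
    using e1 e2 I1 I2 R by simp
qed

end
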